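(* The size $z_{77}$ of the non-self-referencing LZ77 factorization satisfies (already over a ternary alphabet): substitutions: $\liminf_{n\to\infty}\mathsf{MS}_{\mathrm{sub}}(z_{77},n)\ge 2$ and $\mathsf{AS}_{\mathrm{sub}}(z_{77},n)\ge z_{77}-1$; insertions: $\liminf_{n\to\infty}\mathsf{MS}_{\mathrm{ins}}(z_{77},n)\ge 2$ and $\mathsf{AS}_{\mathrm{ins}}(z_{77},n)\ge z_{77}-1$; deletions: $\liminf_{n\to\infty}\mathsf{MS}_{\mathrm{del}}(z_{77},n)\ge 2$ and $\mathsf{AS}_{\mathrm{del}}(z_{77},n)\ge z_{77}-2$.
   Context: Strings are over an alphabet $\Sigma$ (with at least three characters); $\mathsf{ed}$ is the edit distance. $\mathsf{MS}_{\mathrm{sub}}(C,n)=\max_{T\in\Sigma^n}\{C(T')/C(T): T'\in\Sigma^n,\ \mathsf{ed}(T,T')=1\}$, with $\mathsf{MS}_{\mathrm{ins}},\mathsf{MS}_{\mathrm{del}}$ analogous for $T'$ of length $n+1$, resp. $n-1$, and $\mathsf{AS}_\ast$ analogous with $C(T')-C(T)$. A bound "$\mathsf{AS}\ge z_{77}-c$" means there are strings $T$ with $z_{77}(T)$ arbitrarily large and $T'$ obtained by one edit of that type with $z_{77}(T')-z_{77}(T)\ge z_{77}(T)-c$. The non-self-referencing LZ77 factorization of $T$ is $T=f_1\cdots f_z$ where, with $f_0=\varepsilon$, for each $1\le i<z$ the factor $f_i$ is the shortest prefix of $f_i\cdots f_z$ that does not occur as a substring of $f_0f_1\cdots f_{i-1}$,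 and $f_z$ is the remaining suffix; $z_{77}(T)=z$. *)

theory Defs
  imports Complex_Main "HOL-Library.Sublist" "HOL-Library.Extended_Real" "HOL-Library.Liminf_Limsup"
begin

fun ed :: "'a list \<Rightarrow> 'a list \<Rightarrow> nat" where
  "ed [] ys = length ys"
| "ed (x # xs) [] = Suc (length xs)"
| "ed (x # xs) (y # ys) =
     min (min (ed xs (y # ys) + 1) (ed (x # xs) ys + 1))
         (ed xs ys + (if x = y then 0 else 1))"

definition strs :: "'a set \<Rightarrow> nat \<Rightarrow> 'a list set" where
  "strs Alph n = {T. set T \<subseteq> Alph \<and> length T = n}"

text \<open>Number of factors of the non-self-referencing LZ77 factorization of R,
  given the already factorized prefix P (f_0 f_1 ... f_(i-1)).\<close>
function lz_count :: "'a list \<Rightarrow> 'a list \<Rightarrow> nat" where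
  "lz_count P R =
     (if R = [] then 0
      else if (\<exists>k\<le>length R. \<not> sublist (take k R) P)
      then (let k = (LEAST k. \<not> sublist (take k R) P)
            in Suc (lz_count (P @ take k R) (drop k R)))
      else 1)"
  by pat_completeness auto
termination
proof (relation "measure (\<lambda>(P, R). length R)")
  show "wf (measure (\<lambda>(P, R). length R))" by simp
next
  fix P R :: "'a list" and k
  assume ne: "R \<noteq> []" and ex: "\<exists>k\<le>length R. \<not> sublist (take k R) P"
    and k: "k = (LEAST k. \<not> sublist (take k R) P)"
  from ex obtain j where "\<not> sublist (take j R) P" by blast
  hence "\<not> sublist (take k R) P" unfolding k by (rule LeastI)
  hence "k \<noteq> 0" by auto
  thus "((P @ take k R, drop k R), P, R) \<in> measure (\<lambda>(P, R). length R)"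
    using ne by simp
qed

definition z77 :: "'a list \<Rightarrow> nat" where
  "z77 T = lz_count [] T"

definition MS_sub :: "('a list \<Rightarrow> nat) \<Rightarrow> 'a set \<Rightarrow> nat \<Rightarrow> real" where
  "MS_sub C Alph n = Max {real (C T') / real (C T) | T T'.
     T \<in> strs Alph n \<and> T' \<in> strs Alph n \<and> ed T T' = 1}"

definition MS_ins :: "('a list \<Rightarrow> nat) \<Rightarrow> 'a set \<Rightarrow> nat \<Rightarrow> real" where
  "MS_ins C Alph n = Max {real (C T') / real (C T) | T T'.
     T \<in> strs Alph n \<and> T' \<in> strs Alph (n + 1) \<and> ed T T' = 1}"

definition MS_del :: "('a list \<Rightarrow> nat) \<Rightarrow> 'a set \<Rightarrow> nat \<Rightarrow> real" where
  "MS_del C Alph n = Max {real (C T') / real (C T) | T T'.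
     T \<in> strs Alph n \<and> T' \<in> strs Alph (n - 1) \<and> ed T T' = 1}"

end

theory Submission
  imports Defs
begin

declare lz_count.simps[simp del]

lemma lz_step:
  assumes "f \<noteq> []" "\<forall>j<length f. sublist (take j f) P" "\<not> sublist f P"
  shows "lz_count P (f @ R) = Suc (lz_count (P @ f) R)"
proof -
  have ex: "\<exists>k\<le>length (f @ R). \<not> sublist (take k (f @ R)) P"
    by (rule exI[of _ "length f"]) (use assms in auto)
  have L: "(LEAST k. \<not> sublist (take k (f @ R)) P) = length f"
  proof (rule Least_equality)
    show "\<not> sublist (take (length f) (f @ R)) P" using assms by simp
  next
    fix y assume "\<not> sublist (take y (f @ R)) P"
    then show "length f \<le> y" using assms(2) by (metis not_le_imp_less take_append take_eq_Nil2 diff_is_0_eq append_Nil2 less_imp_le)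
  qed
  show ?thesis
    apply (subst lz_count.simps)
    using assms ex L by (simp add: Let_def)
qed

lemma lz_last:
  assumes "R \<noteq> []" "sublist R P"
  shows "lz_count P R = 1"
proof -
  have "\<not> (\<exists>k\<le>length R. \<not> sublist (take k R) P)"
    using assms(2) sublist_order.order_trans sublist_take by blast
  then show ?thesis using assms(1) apply (subst lz_count.simps) by auto
qed

lemma lz_nil[simp]: "lz_count P [] = 0"
  by (subst lz_count.simps) simp

definition flat :: "('a list \<times> 'a list) list \<Rightarrow> 'a list" where
  "flat xs = concat (map (\<lambda>(X,Y). X @ Y) xs)"

lemma flat_simps[simp]: "flat [] = []" "flat ((X,Y)#xs) = X @ Y @ flat xs"
  "flat (xs @ ys) = flat xs @ flat ys"
  by (auto simp: flat_def)

fun nov :: "'a list \<Rightarrow> ('a list \<times> 'a list) list \<Rightarrow> bool" where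
  "nov P [] = True"
| "nov P ((X,Y)#rest) = (Y \<noteq> [] \<and> \<not> sublist Y (P @ X) \<and> nov (P @ X @ Y) rest)"

lemma nov_append: "nov P (xs @ ys) = (nov P xs \<and> nov (P @ flat xs) ys)"
  by (induction P xs rule: nov.induct) auto

lemma nov_lower:
  "\<And>W xs Z. R = W @ flat xs @ Z \<Longrightarrow> nov (P @ W) xs \<Longrightarrow> length xs \<le> lz_count P R"
proof (induction P R rule: lz_count.induct)
  case (1 P R W xs Z)
  show ?case
  proof (cases xs)
    case Nil then show ?thesis by simp
  next
    case (Cons p rest)
    obtain X Y where p: "p = (X,Y)" by (cases p)
    define X0 where "X0 = W @ X"
    have R: "R = X0 @ Y @ flat rest @ Z" using 1(2) Cons p X0_def by simp
    have Yne: "Y \<noteq> []" and Ynov: "\<not> sublist Y (P @ X0)" and rnov: "nov (P @ X0 @ Y) rest"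
      using 1(3) Cons p X0_def by auto
    have Rne: "R \<noteq> []" using R Yne by simp
    have wit: "\<not> sublist (take (length X0 + length Y) R) P"
    proof
      assume "sublist (take (length X0 + length Y) R) P"
      then have "sublist (X0 @ Y) P" using R by simp
      then have "sublist Y (P @ X0)"
        by (meson sublist_append_leftI sublist_append_rightI sublist_order.order_trans)
      with Ynov show False by simp
    qed
    have ex: "\<exists>k\<le>length R. \<not> sublist (take k R) P"
      using wit R by (intro exI[of _ "length X0 + length Y"]) simp
    define k where "k = (LEAST k. \<not> sublist (take k R) P)"
    have kn: "\<not> sublist (take k R) P" unfolding k_def using wit by (rule LeastI)
    have kle: "k \<le> length X0 + length Y" unfolding k_def using wit by (rule Least_le)
    have k0: "k \<noteq> 0" using kn by (auto)
    have eq: "lz_count P R = Suc (lz_count (P @ take k R) (drop k R))"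
      using Rne ex by (subst lz_count.simps) (simp add: Let_def k_def)
    show ?thesis
    proof (cases "k \<le> length X0")
      case True
      have d: "drop k R = drop k X0 @ flat (([],Y) # rest) @ Z" using R True by simp
      have t: "take k R = take k X0" using R True by simp
      have n: "nov ((P @ take k R) @ drop k X0) (([],Y) # rest)"
        using t Ynov rnov Yne by simp
      have "length (([],Y) # rest) \<le> lz_count (P @ take k R) (drop k R)"
        by (rule 1(1)[OF Rne ex k_def d n])
      then show ?thesis using eq Cons by simp
    next
      case False
      have d: "drop k R = drop (k - length X0) Y @ flat rest @ Z" using R False kle by simp
      have t: "take k R = X0 @ take (k - length X0) Y" using R False kle by simp
      have n: "nov ((P @ take k R) @ drop (k - length X0) Y) rest"
        using t rnov by simp
      have "length rest \<le> lz_count (P @ take k R) (drop k R)"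
        by (rule 1(1)[OF Rne ex k_def d n])
      then show ?thesis using eq Cons by simp
    qed
  qed
qed
fun W :: "'a \<Rightarrow> 'a \<Rightarrow> nat \<Rightarrow> 'a list" where
  "W a b 0 = [a]"
| "W a b (Suc n) = W a b n @ W a b n @ [b]"

fun V :: "'a \<Rightarrow> 'a \<Rightarrow> nat \<Rightarrow> 'a list" where
  "V a b 0 = [a]"
| "V a b (Suc n) = W a b n @ V a b n"

lemma W_V: "W a b n = V a b n @ replicate n b"
  by (induction n) (auto simp: replicate_append_same)

lemma V_hd: "\<exists>V'. V a b n = a # V'"
  by (induction n) (auto simp: W_V)

lemma W_hd: "\<exists>W'. W a b n = a # W'"
  using V_hd[of a b n] by (auto simp: W_V)

lemma V_ne: "V a b n \<noteq> []" by (metis V_hd list.distinct(1))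

lemma V_last: "last (V a b n) = a"
proof (induction n)
  case (Suc n)
  have "last (W a b n @ V a b n) = last (V a b n)" by (rule last_appendR[OF V_ne])
  then show ?case using Suc by simp
qed simp

lemma W_set: "set (W a b n) \<subseteq> {a, b}"
  by (induction n) auto

lemma W_len: "length (W a b n) = 2 ^ Suc n - 1"
  by (induction n) auto

lemma lz_W: "lz_count [] (W a b n @ R) = Suc n + lz_count (W a b n) R"
proof (induction n arbitrary: R)
  case 0
  have "lz_count [] ([a] @ R) = Suc (lz_count ([] @ [a]) R)"
    by (rule lz_step) auto
  then show ?case by simp
next
  case (Suc n)
  have s: "lz_count (W a b n) ((W a b n @ [b]) @ R) = Suc (lz_count (W a b n @ W a b n @ [b]) R)"
    by (subst lz_step) (auto simp: nth_append take_append dest: sublist_length_le)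
  show ?case using Suc[of "(W a b n @ [b]) @ R"] s by simp
qed

lemma z_W_pad: "lz_count (W a b n) (take j (W a b n @ [b])) \<le> 1"
proof (cases "j \<le> length (W a b n)")
  case True
  then show ?thesis
    by (cases "take j (W a b n) = []") (auto simp: lz_last)
next
  case False
  then have "take j (W a b n @ [b]) = (W a b n @ [b]) @ []" by simp
  also have "lz_count (W a b n) \<dots> = Suc (lz_count (W a b n @ W a b n @ [b]) [])"
    by (subst lz_step) (auto simp: take_append dest: sublist_length_le)
  finally show ?thesis by simp
qed

lemma rep_split:
  assumes "y \<noteq> b" "sublist (replicate j b) (X @ y # Y)"
  shows "sublist (replicate j b) X \<or> sublist (replicate j b) (y # Y)"
proof -
  have "sublist (replicate j b) X \<or> sublist (replicate j b) (y # Y) \<or>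
    (\<exists>xs1 xs2. replicate j b = xs1 @ xs2 \<and> suffix xs1 X \<and> prefix xs2 (y # Y))"
    using assms(2) sublist_append by metis
  moreover
  { fix xs1 xs2 assume h: "replicate j b = xs1 @ xs2" "suffix xs1 X" "prefix xs2 (y # Y)"
    have "sublist (replicate j b) X"
    proof (cases xs2)
      case Nil then show ?thesis using h by auto
    next
      case (Cons z zs)
      then have "z = y" using h(3) by simp
      moreover have "z \<in> set (replicate j b)" using h(1) Cons by simp
      ultimately show ?thesis using assms(1) by simp
    qed }
  ultimately show ?thesis by blast
qed

lemma rep_snoc:
  assumes "sublist (replicate (Suc j) b) (X @ [b])"
  shows "sublist (replicate j b) X"
proof -
  have r: "replicate (Suc j) b = replicate j b @ [b]" by (simp add: replicate_append_same)
  obtain ps ss where e: "X @ [b] = ps @ (replicate j b @ [b]) @ ss"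
    using assms unfolding r sublist_def by blast
  show ?thesis
  proof (cases ss rule: rev_cases)
    case Nil
    then have "X = ps @ replicate j b" using e by simp
    then show ?thesis by simp
  next
    case (snoc ss' c)
    then have "X = ps @ replicate j b @ ([b] @ ss')" using e by simp
    then show ?thesis using sublist_appendI[of "replicate j b" ps "[b] @ ss'"] by simp
  qed
qed

lemma rep_mono: "sublist (replicate (Suc j) b) X \<Longrightarrow> sublist (replicate j b) X"
proof -
  assume h: "sublist (replicate (Suc j) b) X"
  have "sublist (replicate j b) ([b] @ replicate j b)" by (rule sublist_append_leftI)
  then show ?thesis using h sublist_order.order_trans by fastforce
qed

lemma noW: "a \<noteq> b \<Longrightarrow> \<not> sublist (replicate (Suc n) b) (W a b n)"
proof (induction n)
  case 0
  show ?case
  proof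
    assume "sublist (replicate (Suc 0) b) (W a b 0)"
    then have "set [b] \<subseteq> set [a]" by (auto dest!: set_mono_sublist)
    then show False using 0 by simp
  qed
next
  case (Suc n)
  obtain W' where w: "W a b n = a # W'" using W_hd[of a b n] by blast
  show ?case
  proof
    assume "sublist (replicate (Suc (Suc n)) b) (W a b (Suc n))"
    then have "sublist (replicate (Suc (Suc n)) b) ((W a b n @ W a b n) @ [b])" by simp
    then have "sublist (replicate (Suc n) b) (W a b n @ a # W')"
      using w by (metis rep_snoc)
    then have "sublist (replicate (Suc n) b) (W a b n) \<or> sublist (replicate (Suc n) b) (a # W')"
      using rep_split[of a b "Suc n" "W a b n" W'] Suc.prems by blast
    then have "sublist (replicate (Suc n) b) (W a b n)"
      using w by auto
    then show False using Suc by simp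
  qed
qed

lemma noV: "a \<noteq> b \<Longrightarrow> \<not> sublist (replicate (Suc n) b) (V a b (Suc n))"
proof
  assume ab: "a \<noteq> b" and s: "sublist (replicate (Suc n) b) (V a b (Suc n))"
  obtain V' where v: "V a b n = a # V'" using V_hd[of a b n] by blast
  have "sublist (replicate (Suc n) b) (W a b n) \<or> sublist (replicate (Suc n) b) (V a b n)"
    using rep_split[of a b "Suc n" "W a b n" V'] ab s v by auto
  moreover have "sublist (V a b n) (W a b n)" by (simp add: W_V)
  ultimately have "sublist (replicate (Suc n) b) (W a b n)"
    using sublist_order.order_trans by blast
  then show False using noW[OF ab] by simp
qed

lemma S1:
  assumes ab: "a \<noteq> b" and nr: "\<not> sublist (replicate j b) U"
  shows "\<not> sublist (replicate j b @ [a]) (U @ replicate k b)"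
proof
  assume s: "sublist (replicate j b @ [a]) (U @ replicate k b)"
  have "sublist (replicate j b @ [a]) U \<or> sublist (replicate j b @ [a]) (replicate k b) \<or>
    (\<exists>xs1 xs2. replicate j b @ [a] = xs1 @ xs2 \<and> suffix xs1 U \<and> prefix xs2 (replicate k b))"
    using s sublist_append by metis
  moreover have "\<not> sublist (replicate j b @ [a]) U"
    using nr by (meson sublist_append_rightI sublist_order.order_trans)
  moreover have "\<not> sublist (replicate j b @ [a]) (replicate k b)"
  proof
    assume "sublist (replicate j b @ [a]) (replicate k b)"
    from set_mono_sublist[OF this] have "a \<in> set (replicate k b)" by auto
    then show False using ab by simp
  qed
  moreover
  { fix xs1 xs2 assume h: "replicate j b @ [a] = xs1 @ xs2" "suffix xs1 U" "prefix xs2 (replicate k b)"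
    have False
    proof (cases xs2 rule: rev_cases)
      case Nil
      then have "sublist (replicate j b @ [a]) U" using h by auto
      then show False using nr by (meson sublist_append_rightI sublist_order.order_trans)
    next
      case (snoc zs z)
      then have "z = a" using h(1) by simp
      moreover have "z \<in> set (replicate k b)" using h(3) snoc
        using set_mono_prefix[OF h(3)] by auto
      ultimately show False using ab by simp
    qed }
  ultimately show False by blast
qed

lemma suffix_short: "suffix xs (ys @ zs) \<Longrightarrow> length xs \<le> length zs \<Longrightarrow> suffix xs zs"
  by (meson suffix_def suffix_length_suffix)

lemma N1core:
  assumes ab: "a \<noteq> b" and v: "U = a # U'" and lv: "last U = a"
    and nr: "\<not> sublist (replicate j b) U"
  shows "\<not> sublist (U @ replicate j b @ [a]) (U' @ replicate j b @ U @ replicate (Suc j) b)"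
proof
  let ?S = "U @ replicate j b @ [a]"
  let ?ys = "U' @ replicate j b" and ?zs = "U @ replicate (Suc j) b"
  assume "sublist ?S (U' @ replicate j b @ U @ replicate (Suc j) b)"
  then have s: "sublist ?S (?ys @ ?zs)" by simp
  have S1': "\<not> sublist (replicate j b @ [a]) ?zs" by (rule S1[OF ab nr])
  have c: "sublist ?S ?ys \<or> sublist ?S ?zs \<or>
    (\<exists>xs1 xs2. ?S = xs1 @ xs2 \<and> suffix xs1 ?ys \<and> prefix xs2 ?zs)"
    using s sublist_append by metis
  moreover have "\<not> sublist ?S ?ys"
  proof
    assume "sublist ?S ?ys"
    from sublist_length_le[OF this] show False using v by simp
  qed
  moreover have "\<not> sublist ?S ?zs"
    using S1' by (meson sublist_append_leftI sublist_order.order_trans)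
  moreover
  { fix xs1 xs2 assume h: "?S = xs1 @ xs2" "suffix xs1 ?ys" "prefix xs2 ?zs"
    have lx: "length xs1 \<le> length ?ys" using h(2) unfolding suffix_def by (metis le_add2 length_append length_replicate)
    have False
    proof (cases "length xs1 \<le> length U")
      case True
      then have "xs2 = drop (length xs1) U @ replicate j b @ [a]"
        using h(1) by (metis append_eq_append_conv_if)
      then have "sublist (replicate j b @ [a]) xs2" by simp
      then have "sublist (replicate j b @ [a]) ?zs"
        using h(3) by (meson prefix_imp_sublist sublist_order.order_trans)
      then show False using S1' by simp
    next
      case False
      define t where "t = length xs1 - length U"
      have tj: "t < j" using lx False v unfolding t_def by simp
      have "xs1 = take (length xs1) ?S" using h(1) by simp
      also have "\<dots> = U @ take t (replicate j b @ [a])" using False t_def by simp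
      also have "\<dots> = U @ replicate t b" using tj by simp
      finally have x1: "xs1 = U @ replicate t b" .
      have "U = butlast U @ [a]" using lv v by (metis append_butlast_last_id list.distinct(1))
      then have "suffix (a # replicate t b) xs1" using x1
        by (metis append1_eq_conv same_suffix_suffix suffix_bot.extremum_unique suffix_Nil append_self_conv list.inject append.assoc Cons_eq_appendI eq_Nil_appendI Nil_suffix)
      then have "suffix (a # replicate t b) ?ys" using h(2) suffix_order.order_trans by blast
      then have "suffix (a # replicate t b) (replicate j b)"
        by (rule suffix_short) (use tj in simp)
      then have "a \<in> set (replicate j b)" by (meson list.set_intros(1) set_mono_suffix subsetD)
      then show False using ab by simp
    qed }
  ultimately show False by blast
qed


lemma W_tl_Suc: "tl (W a b (Suc k)) = tl (W a b k) @ W a b k @ [b]"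
  using W_hd[of a b k] by auto

fun ivs :: "'a \<Rightarrow> 'a \<Rightarrow> nat \<Rightarrow> ('a list \<times> 'a list) list" where
  "ivs a b 0 = []"
| "ivs a b (Suc m) = ivs a b m @ [([], W a b m @ [a]), (tl (V a b m), replicate (Suc (Suc m)) b)]"

lemma block_eq: "W a b m @ [a] @ tl (V a b m) @ replicate (Suc (Suc m)) b = W a b (Suc m) @ [b]"
proof -
  obtain U' where v: "V a b m = a # U'" using V_hd[of a b m] by blast
  have "W a b (Suc m) @ [b] = W a b m @ V a b m @ replicate m b @ [b] @ [b]"
    by (simp add: W_V[of a b m])
  also have "\<dots> = W a b m @ V a b m @ replicate (Suc (Suc m)) b"
  proof -
    have "replicate m b @ [b] @ [b] = b # b # replicate m b" by (induction m) auto
    then show ?thesis by simp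
  qed
  finally show ?thesis using v by simp
qed

lemma flat_ivs: "tl (W a b (Suc k)) = [a, b] @ flat (ivs a b k)"
proof (induction k)
  case 0 then show ?case by simp
next
  case (Suc k)
  have "tl (W a b (Suc (Suc k))) = tl (W a b (Suc k)) @ W a b (Suc k) @ [b]"
    by (rule W_tl_Suc)
  also have "\<dots> = [a, b] @ flat (ivs a b k) @ W a b k @ [a] @ tl (V a b k) @ replicate (Suc (Suc k)) b"
    using Suc block_eq[of a b k] by simp
  finally show ?case by simp
qed

lemma N1full:
  assumes ab: "a \<noteq> b"
  shows "\<not> sublist (W a b k @ [a]) (tl (W a b (Suc k)))"
proof (cases k)
  case 0
  show ?thesis
  proof
    assume "sublist (W a b k @ [a]) (tl (W a b (Suc k)))"
    then have "sublist [a, a] [a, b]" using 0 by simp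
    then obtain ps ss where "[a, b] = ps @ [a, a] @ ss" unfolding sublist_def by blast
    moreover have "length ps = 0" "length ss = 0" using arg_cong[OF calculation, of length] by simp_all
    ultimately show False using ab by simp
  qed
next
  case (Suc m)
  obtain U' where v: "V a b k = a # U'" using V_hd[of a b k] by blast
  have nr: "\<not> sublist (replicate k b) (V a b k)" using noV[OF ab, of m] Suc by simp
  have c: "\<not> sublist (V a b k @ replicate k b @ [a]) (U' @ replicate k b @ V a b k @ replicate (Suc k) b)"
    by (rule N1core[OF ab v V_last nr])
  have e1: "W a b k @ [a] = V a b k @ replicate k b @ [a]" by (simp add: W_V)
  have "tl (W a b (Suc k)) = tl (W a b k) @ W a b k @ [b]" by (rule W_tl_Suc)
  also have "\<dots> = U' @ replicate k b @ V a b k @ replicate k b @ [b]"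
    using v by (simp add: W_V)
  also have "\<dots> = U' @ replicate k b @ V a b k @ replicate (Suc k) b"
    by (simp add: replicate_append_same)
  finally show ?thesis using c e1 by simp
qed

lemma not_sub_Cons:
  assumes "c \<notin> set xs" "\<not> sublist xs L"
  shows "\<not> sublist xs (c # L)"
proof
  assume "sublist xs (c # L)"
  then have "prefix xs (c # L) \<or> sublist xs L" by (simp add: sublist_Cons_right)
  then show False
  proof
    assume p: "prefix xs (c # L)"
    show False
    proof (cases xs)
      case Nil then show False using assms(2) by simp
    next
      case (Cons x xs')
      then show False using p assms(1) by simp
    qed
  qed (use assms in simp)
qed

lemma not_sub_Cons2:
  assumes "c \<notin> set xs" "\<not> sublist xs L" "2 \<le> length xs"
  shows "\<not> sublist xs (a # c # L)"
proof
  assume "sublist xs (a # c # L)"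
  then have "prefix xs (a # c # L) \<or> sublist xs (c # L)" by (simp add: sublist_Cons_right)
  then show False
  proof
    assume p: "prefix xs (a # c # L)"
    obtain x y xs' where "xs = x # y # xs'" using assms(3)
      by (metis One_nat_def Suc_1 Suc_le_length_iff)
    then show False using p assms(1) by simp
  qed (use not_sub_Cons[OF assms(1,2)] in simp)
qed

lemma nov_ivs:
  assumes ab: "a \<noteq> b" and nb: "b \<notin> set pre"
    and n1: "\<And>k. \<not> sublist (W a b k @ [a]) (pre @ tl (W a b (Suc k)))"
  shows "nov (pre @ [a, b]) (ivs a b n)"
proof (induction n)
  case 0 then show ?case by simp
next
  case (Suc n)
  define T1 where "T1 = tl (W a b (Suc n))"
  let ?ctx = "pre @ T1"
  have t: "T1 = a # b # flat (ivs a b n)" unfolding T1_def using flat_ivs[of a b n] by (simp del: W.simps)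
  have ctx: "pre @ [a, b] @ flat (ivs a b n) = ?ctx" using t by simp
  obtain U' where v: "V a b n = a # U'" using V_hd[of a b n] by blast
  obtain W' where w: "W a b n = a # W'" using W_hd[of a b n] by blast
  let ?r = "replicate (Suc (Suc n)) b"
  have noWn: "\<not> sublist ?r (W a b n)"
  proof
    assume "sublist ?r (W a b n)"
    from rep_mono[OF this] show False using noW[OF ab, of n] by simp
  qed
  have noVn: "\<not> sublist ?r (V a b n)"
  proof
    assume "sublist ?r (V a b n)"
    moreover have "sublist (V a b n) (W a b n)" by (simp add: W_V)
    ultimately show False using noWn sublist_order.order_trans by blast
  qed
  have noWS: "\<not> sublist ?r T1"
  proof
    assume "sublist ?r T1"
    moreover have "sublist T1 (W a b (Suc n))"
    proof -
      obtain X where "W a b (Suc n) = a # X" using W_hd[of a b "Suc n"] by blast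
      then have "W a b (Suc n) = [a] @ T1" unfolding T1_def by (simp del: W.simps)
      then show ?thesis by (metis sublist_append_leftI)
    qed
    ultimately show False using noW[OF ab, of "Suc n"] sublist_order.order_trans by blast
  qed
  have nopre: "\<not> sublist ?r pre"
  proof
    assume "sublist ?r pre"
    from set_mono_sublist[OF this] have "b \<in> set pre" by simp
    then show False using nb by simp
  qed
  have n2: "\<not> sublist ?r (?ctx @ W a b n @ V a b n)"
  proof
    assume s: "sublist ?r (?ctx @ W a b n @ V a b n)"
    have e1: "?ctx @ W a b n @ V a b n = ?ctx @ a # (W' @ V a b n)" using w by simp
    have o1: "sublist ?r ?ctx \<or> sublist ?r (a # (W' @ V a b n))"
      by (rule rep_split[OF ab]) (use s e1 in simp)
    have e2: "W a b n @ V a b n = W a b n @ a # U'" using v by simp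
    have "\<not> sublist ?r (W a b n @ a # U')"
    proof
      assume "sublist ?r (W a b n @ a # U')"
      then have "sublist ?r (W a b n) \<or> sublist ?r (a # U')" by (rule rep_split[OF ab])
      then show False using noWn noVn v by simp
    qed
    then have o2: "\<not> sublist ?r (a # (W' @ V a b n))" using w e2 by simp
    have "\<not> sublist ?r (pre @ a # b # flat (ivs a b n))"
    proof
      assume "sublist ?r (pre @ a # b # flat (ivs a b n))"
      then have "sublist ?r pre \<or> sublist ?r (a # b # flat (ivs a b n))" by (rule rep_split[OF ab])
      then show False using nopre noWS t by simp
    qed
    then have o3: "\<not> sublist ?r ?ctx" using t by simp
    show False using o1 o2 o3 by blast
  qed
  have n1': "\<not> sublist (W a b n @ [a]) ?ctx" using n1[of n] unfolding T1_def .
  have "nov ?ctx [([], W a b n @ [a]), (tl (V a b n), ?r)]"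
    using n1' n2 v by simp
  then show ?case using Suc.IH nov_append[of "pre @ [a, b]" "ivs a b n"] ctx
    by (simp del: W.simps)
qed


lemma sublist_single[simp]: "sublist [x] ys \<longleftrightarrow> x \<in> set ys"
  unfolding sublist_def by (metis append_Cons append_Nil in_set_conv_decomp)

lemma len_ivs[simp]: "length (ivs a b n) = 2 * n"
  by (induction n) auto

lemma W_ne: "W a b k \<noteq> []" using W_hd[of a b k] by auto

lemma z_sub:
  assumes ab: "a \<noteq> b" and ac: "a \<noteq> c" and bc: "b \<noteq> c"
  shows "2 * n + 3 \<le> z77 (c # tl (W a b (Suc n)) @ u)"
proof -
  define xs where "xs = [([], [c]), ([], [a]), ([], [b])] @ ivs a b n"
  have R: "c # tl (W a b (Suc n)) @ u = [] @ flat xs @ u"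
    unfolding xs_def using flat_ivs[of a b n] by (simp del: W.simps)
  have n1: "\<And>k. \<not> sublist (W a b k @ [a]) ([c] @ tl (W a b (Suc k)))"
  proof -
    fix k
    have "c \<notin> set (W a b k @ [a])" using W_set[of a b k] ac bc by auto
    from not_sub_Cons[OF this N1full[OF ab, of k]]
    show "\<not> sublist (W a b k @ [a]) ([c] @ tl (W a b (Suc k)))" by (simp del: W.simps)
  qed
  have nv: "nov ([c] @ [a, b]) (ivs a b n)" by (rule nov_ivs[OF ab _ n1]) (use bc in simp)
  have "nov ([] @ []) xs" unfolding xs_def nov_append using nv ab ac bc by simp
  from nov_lower[OF R this] have "length xs \<le> z77 (c # tl (W a b (Suc n)) @ u)"
    by (simp add: z77_def)
  then show ?thesis unfolding xs_def by simp
qed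

lemma z_ins:
  assumes ab: "a \<noteq> b" and ac: "a \<noteq> c" and bc: "b \<noteq> c"
  shows "2 * n + 3 \<le> z77 (a # c # tl (W a b (Suc n)) @ u)"
proof -
  define xs where "xs = [([], [a]), ([], [c]), ([a], [b])] @ ivs a b n"
  have R: "a # c # tl (W a b (Suc n)) @ u = [] @ flat xs @ u"
    unfolding xs_def using flat_ivs[of a b n] by (simp del: W.simps)
  have n1: "\<And>k. \<not> sublist (W a b k @ [a]) ([a, c] @ tl (W a b (Suc k)))"
  proof -
    fix k
    have c1: "c \<notin> set (W a b k @ [a])" using W_set[of a b k] ac bc by auto
    have c2: "2 \<le> length (W a b k @ [a])" using W_ne[of a b k] by (cases "W a b k") auto
    have "\<not> sublist (W a b k @ [a]) (a # c # tl (W a b (Suc k)))"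
      by (rule not_sub_Cons2[OF c1 N1full[OF ab, of k] c2])
    then show "\<not> sublist (W a b k @ [a]) ([a, c] @ tl (W a b (Suc k)))" by (simp del: W.simps)
  qed
  have nv: "nov ([a, c] @ [a, b]) (ivs a b n)" by (rule nov_ivs[OF ab _ n1]) (use ab bc in simp)
  have "nov ([] @ []) xs" unfolding xs_def nov_append using nv ab ac bc by simp
  from nov_lower[OF R this] have "length xs \<le> z77 (a # c # tl (W a b (Suc n)) @ u)"
    by (simp add: z77_def)
  then show ?thesis unfolding xs_def by simp
qed

lemma z_del:
  assumes ab: "a \<noteq> b"
  shows "2 * n + 2 \<le> z77 (tl (W a b (Suc n)) @ u)"
proof -
  define xs where "xs = [([], [a]), ([], [b])] @ ivs a b n"
  have R: "tl (W a b (Suc n)) @ u = [] @ flat xs @ u"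
    unfolding xs_def using flat_ivs[of a b n] by (simp del: W.simps)
  have n1: "\<And>k. \<not> sublist (W a b k @ [a]) ([] @ tl (W a b (Suc k)))"
    using N1full[OF ab] by simp
  have nv: "nov ([] @ [a, b]) (ivs a b n)" by (rule nov_ivs[OF ab _ n1]) simp
  have "nov ([] @ []) xs" unfolding xs_def nov_append using nv ab by simp
  from nov_lower[OF R this] have "length xs \<le> z77 (tl (W a b (Suc n)) @ u)"
    by (simp add: z77_def)
  then show ?thesis unfolding xs_def by simp
qed

lemma z_T: "z77 (W a b k @ u) = Suc k + lz_count (W a b k) u"
  by (simp add: z77_def lz_W del: W.simps)

lemma ed_refl[simp]: "ed xs xs = 0"
  by (induction xs) auto

lemma ed_zero: "ed xs ys = 0 \<Longrightarrow> xs = ys"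
  by (induction xs ys rule: ed.induct) (auto simp: min_def split: if_splits)

lemma ed_sub: "x \<noteq> y \<Longrightarrow> ed (x # L) (y # L) = 1"
proof -
  assume xy: "x \<noteq> y"
  have "ed (x # L) (y # L) \<le> 1" by simp
  moreover have "ed (x # L) (y # L) \<noteq> 0" using ed_zero xy by blast
  ultimately show ?thesis by simp
qed

lemma ed_cons_le: "ed L (c # L) \<le> 1"
proof (cases L)
  case Nil then show ?thesis by simp
next
  case (Cons x L')
  have "ed (x # L') (c # x # L') \<le> ed (x # L') (x # L') + 1" by simp
  then show ?thesis using Cons by simp
qed

lemma ed_ins: "ed (a # L) (a # c # L) = 1"
proof -
  have "ed (a # L) (a # c # L) \<le> ed L (c # L)" by simp
  then have "ed (a # L) (a # c # L) \<le> 1" using ed_cons_le[of L c] by simp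
  moreover have "ed (a # L) (a # c # L) \<noteq> 0" using ed_zero by fastforce
  ultimately show ?thesis by simp
qed

lemma ed_del: "ed (a # L) L = 1"
proof (cases L)
  case Nil then show ?thesis by simp
next
  case (Cons y L')
  have "ed (a # y # L') (y # L') \<le> ed (y # L') (y # L') + 1" by simp
  then have "ed (a # L) L \<le> 1" using Cons by simp
  moreover have "ed (a # L) L \<noteq> 0" using ed_zero by fastforce
  ultimately show ?thesis by simp
qed

lemma finite_strs: "finite Alph \<Longrightarrow> finite (strs Alph n)"
  unfolding strs_def by (rule finite_lists_length_eq)

lemma Max_lb:
  assumes "finite Alph" "T \<in> strs Alph n" "T' \<in> strs Alph m" "ed T T' = 1"
  shows "real (C T') / real (C T) \<le> Max {real (C T') / real (C T) | T T'.
     T \<in> strs Alph n \<and> T' \<in> strs Alph m \<and> ed T T' = 1}"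
proof (rule Max_ge)
  have "{real (C T') / real (C T) | T T'. T \<in> strs Alph n \<and> T' \<in> strs Alph m \<and> ed T T' = 1}
    \<subseteq> (\<lambda>(T, T'). real (C T') / real (C T)) ` (strs Alph n \<times> strs Alph m)"
    by auto
  moreover have "finite ((\<lambda>(T, T'). real (C T') / real (C T)) ` (strs Alph n \<times> strs Alph m))"
    using finite_strs[OF assms(1)] by simp
  ultimately show "finite {real (C T') / real (C T) | T T'. T \<in> strs Alph n \<and> T' \<in> strs Alph m \<and> ed T T' = 1}"
    by (rule finite_subset)
qed (use assms in blast)

lemma ratio_lb:
  fixes z z' n :: nat
  assumes "2 * n + 2 \<le> z'" "0 < z" "z \<le> n + 3"
  shows "(2 * real n + 2) / (real n + 3) \<le> real z' / real z"
proof -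
  have "(2 * real n + 2) / (real n + 3) \<le> (2 * real n + 2) / real z"
    using assms by (intro divide_left_mono) auto
  also have "\<dots> \<le> real z' / real z"
    using assms by (intro divide_right_mono) auto
  finally show ?thesis .
qed

lemma liminf_gen:
  fixes f :: "nat \<Rightarrow> real" and L :: "nat \<Rightarrow> nat"
  assumes L: "\<And>k. L (Suc k) = 2 * L k + 1"
    and H: "\<And>n N. L n \<le> N \<Longrightarrow> N \<le> 2 * L n + 1 \<Longrightarrow> (2 * real n + 2) / (real n + 3) \<le> f N"
  shows "2 \<le> Liminf sequentially (\<lambda>N. ereal (f N))"
proof -
  have cover: "\<exists>n\<ge>n0. L n \<le> N \<and> N \<le> 2 * L n + 1" if "L n0 \<le> N" for n0 N
    using that
  proof (induction N rule: dec_induct)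
    case base then show ?case by auto
  next
    case (step N)
    then obtain n where n: "n \<ge> n0" "L n \<le> N" "N \<le> 2 * L n + 1" by blast
    show ?case
    proof (cases "Suc N \<le> 2 * L n + 1")
      case True then show ?thesis using n by auto
    next
      case False
      then have "N = L (Suc n)" using n L[of n] by simp
      then show ?thesis using n L[of n] by (intro exI[of _ "Suc n"]) auto
    qed
  qed
  show ?thesis unfolding le_Liminf_iff
  proof (intro allI impI)
    fix y :: ereal assume y: "y < 2"
    show "\<forall>\<^sub>F x in sequentially. y < ereal (f x)"
    proof (cases y)
      case (real r)
      then have r: "r < 2" using y by simp
      obtain n0 :: nat where n0: "4 / (2 - r) < real n0" using reals_Archimedean2 by blast
      show ?thesis
      proof (rule eventually_sequentiallyI[of "L n0"])
        fix N assume "L n0 \<le> N"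
        then obtain n where n: "n \<ge> n0" "L n \<le> N" "N \<le> 2 * L n + 1" using cover by blast
        have "4 / (2 - r) < real n + 3" using n0 n(1) by simp
        then have "4 < (real n + 3) * (2 - r)" using r by (simp add: divide_less_eq)
        then have "r * (real n + 3) < 2 * real n + 2" by (simp add: algebra_simps)
        then have "r < (2 * real n + 2) / (real n + 3)" by (simp add: less_divide_eq)
        also have "\<dots> \<le> f N" by (rule H[OF n(2,3)])
        finally show "y < ereal (f N)" using real by simp
      qed
    next
      case PInf then show ?thesis using y by simp
    next
      case MInf then show ?thesis by simp
    qed
  qed
qed

lemma Wsplit_app: "W a b k @ u = a # (tl (W a b k) @ u)"
proof -
  obtain X where X: "W a b k = a # X" using W_hd[of a b k] by blast
  show ?thesis unfolding X by simp
qed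

lemma set_tl_sub: "set (tl xs) \<subseteq> set xs" by (cases xs) auto

lemma zL: "z77 (a # tl (W a b (Suc n)) @ u) = Suc (Suc n) + lz_count (W a b (Suc n)) u"
  using z_T[of a b "Suc n" u] unfolding Wsplit_app by (simp del: W.simps)

lemma lenL: "length (a # tl (W a b (Suc n)) @ u) = length (W a b (Suc n)) + length u"
  unfolding Wsplit_app[symmetric] by simp

theorem mainTheorem8:
  fixes Alph :: "'a set"
  assumes "finite Alph" and "card Alph \<ge> 3"
  shows
    "(Liminf sequentially (\<lambda>n. ereal (MS_sub z77 Alph n)) \<ge> 2)
    \<and> (\<forall>m. \<exists>T T'. set T \<subseteq> Alph \<and> set T' \<subseteq> Alph \<and> length T' = length T
        \<and> ed T T' = 1 \<and> z77 T \<ge> m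
        \<and> int (z77 T') - int (z77 T) \<ge> int (z77 T) - 1)
    \<and> (Liminf sequentially (\<lambda>n. ereal (MS_ins z77 Alph n)) \<ge> 2)
    \<and> (\<forall>m. \<exists>T T'. set T \<subseteq> Alph \<and> set T' \<subseteq> Alph \<and> length T' = length T + 1
        \<and> ed T T' = 1 \<and> z77 T \<ge> m
        \<and> int (z77 T') - int (z77 T) \<ge> int (z77 T) - 1)
    \<and> (Liminf sequentially (\<lambda>n. ereal (MS_del z77 Alph n)) \<ge> 2)
    \<and> (\<forall>m. \<exists>T T'. set T \<subseteq> Alph \<and> set T' \<subseteq> Alph \<and> length T' + 1 = length T
        \<and> ed T T' = 1 \<and> z77 T \<ge> m
        \<and> int (z77 T') - int (z77 T) \<ge> int (z77 T) - 2)"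
proof -
  obtain B where B: "B \<subseteq> Alph" "card B = 3"
    using obtain_subset_with_card_n[OF assms(2)] by blast
  then obtain a b c where abc: "B = {a, b, c}" "a \<noteq> b" "b \<noteq> c" "a \<noteq> c"
    unfolding card_3_iff by blast
  have inA: "a \<in> Alph" "b \<in> Alph" "c \<in> Alph" using B abc by auto
  have ab: "a \<noteq> b" and bc: "b \<noteq> c" and ac: "a \<noteq> c" using abc by auto
  have setW: "set (W a b k) \<subseteq> Alph" for k using W_set[of a b k] inA by blast
  have setL: "set (tl (W a b k)) \<subseteq> Alph" for k using setW[of k] set_tl_sub[of "W a b k"] by blast
  define Lf where "Lf k = length (W a b (Suc k))" for k
  have Lf: "\<And>k. Lf (Suc k) = 2 * Lf k + 1" unfolding Lf_def by simp
  have pad: "\<exists>u. length (a # tl (W a b (Suc n)) @ u) = N \<and> set u \<subseteq> Alph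
      \<and> 0 < z77 (a # tl (W a b (Suc n)) @ u) \<and> z77 (a # tl (W a b (Suc n)) @ u) \<le> n + 3"
    if "Lf n \<le> N" "N \<le> 2 * Lf n + 1" for n N
  proof (intro exI conjI)
    let ?u = "take (N - Lf n) (W a b (Suc n) @ [b])"
    have "length ?u = N - Lf n" using that unfolding Lf_def by (simp del: W.simps)
    then show "length (a # tl (W a b (Suc n)) @ ?u) = N" using that unfolding lenL Lf_def by (simp del: W.simps)
    have "set (W a b (Suc n) @ [b]) \<subseteq> Alph" using setW[of "Suc n"] inA by (simp del: W.simps)
    then show "set ?u \<subseteq> Alph" using set_take_subset by (rule subset_trans[rotated])
    show "0 < z77 (a # tl (W a b (Suc n)) @ ?u)" unfolding zL by simp
    show "z77 (a # tl (W a b (Suc n)) @ ?u) \<le> n + 3" unfolding zL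
      using z_W_pad[of a b "Suc n" "N - Lf n"] by simp
  qed
  have S1: "2 \<le> Liminf sequentially (\<lambda>n. ereal (MS_sub z77 Alph n))"
  proof (rule liminf_gen[of Lf, OF Lf])
    fix n N assume h: "Lf n \<le> N" "N \<le> 2 * Lf n + 1"
    let ?L = "tl (W a b (Suc n))"
    obtain u where u: "length (a # ?L @ u) = N" "set u \<subseteq> Alph"
      "0 < z77 (a # ?L @ u)" "z77 (a # ?L @ u) \<le> n + 3" using pad[OF h] by blast
    have Ts: "a # ?L @ u \<in> strs Alph N" using u setL[of "Suc n"] inA unfolding strs_def by simp
    have T's: "c # ?L @ u \<in> strs Alph N" using u setL[of "Suc n"] inA unfolding strs_def by simp
    have ed: "ed (a # ?L @ u) (c # ?L @ u) = 1" by (rule ed_sub[OF ac])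
    have "(2 * real n + 2) / (real n + 3) \<le> real (z77 (c # ?L @ u)) / real (z77 (a # ?L @ u))"
      using z_sub[OF ab ac bc, of n u] u(3,4) by (intro ratio_lb) auto
    also have "\<dots> \<le> MS_sub z77 Alph N" unfolding MS_sub_def
      by (rule Max_lb[OF assms(1) Ts T's ed])
    finally show "(2 * real n + 2) / (real n + 3) \<le> MS_sub z77 Alph N" .
  qed
  have S3: "2 \<le> Liminf sequentially (\<lambda>n. ereal (MS_ins z77 Alph n))"
  proof (rule liminf_gen[of Lf, OF Lf])
    fix n N assume h: "Lf n \<le> N" "N \<le> 2 * Lf n + 1"
    let ?L = "tl (W a b (Suc n))"
    obtain u where u: "length (a # ?L @ u) = N" "set u \<subseteq> Alph"
      "0 < z77 (a # ?L @ u)" "z77 (a # ?L @ u) \<le> n + 3" using pad[OF h] by blast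
    have Ts: "a # ?L @ u \<in> strs Alph N" using u setL[of "Suc n"] inA unfolding strs_def by simp
    have T's: "a # c # ?L @ u \<in> strs Alph (N + 1)" using u setL[of "Suc n"] inA unfolding strs_def by simp
    have ed: "ed (a # ?L @ u) (a # c # ?L @ u) = 1" by (rule ed_ins)
    have "(2 * real n + 2) / (real n + 3) \<le> real (z77 (a # c # ?L @ u)) / real (z77 (a # ?L @ u))"
      using z_ins[OF ab ac bc, of n u] u(3,4) by (intro ratio_lb) auto
    also have "\<dots> \<le> MS_ins z77 Alph N" unfolding MS_ins_def
      by (rule Max_lb[OF assms(1) Ts T's ed])
    finally show "(2 * real n + 2) / (real n + 3) \<le> MS_ins z77 Alph N" .
  qed
  have S5: "2 \<le> Liminf sequentially (\<lambda>n. ereal (MS_del z77 Alph n))"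
  proof (rule liminf_gen[of Lf, OF Lf])
    fix n N assume h: "Lf n \<le> N" "N \<le> 2 * Lf n + 1"
    let ?L = "tl (W a b (Suc n))"
    obtain u where u: "length (a # ?L @ u) = N" "set u \<subseteq> Alph"
      "0 < z77 (a # ?L @ u)" "z77 (a # ?L @ u) \<le> n + 3" using pad[OF h] by blast
    have Ts: "a # ?L @ u \<in> strs Alph N" using u setL[of "Suc n"] inA unfolding strs_def by simp
    have T's: "?L @ u \<in> strs Alph (N - 1)" using u setL[of "Suc n"] inA unfolding strs_def by auto
    have ed: "ed (a # ?L @ u) (?L @ u) = 1" by (rule ed_del)
    have "(2 * real n + 2) / (real n + 3) \<le> real (z77 (?L @ u)) / real (z77 (a # ?L @ u))"
      using z_del[OF ab, of n u] u(3,4) by (intro ratio_lb) auto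
    also have "\<dots> \<le> MS_del z77 Alph N" unfolding MS_del_def
      by (rule Max_lb[OF assms(1) Ts T's ed])
    finally show "(2 * real n + 2) / (real n + 3) \<le> MS_del z77 Alph N" .
  qed
  have zT: "z77 (a # tl (W a b (Suc m))) = m + 2" for m
    using zL[of a b m "[]"] by simp
  have S2: "\<forall>m. \<exists>T T'. set T \<subseteq> Alph \<and> set T' \<subseteq> Alph \<and> length T' = length T
        \<and> ed T T' = 1 \<and> z77 T \<ge> m
        \<and> int (z77 T') - int (z77 T) \<ge> int (z77 T) - 1"
  proof
    fix m
    let ?L = "tl (W a b (Suc m))"
    have z': "2 * m + 3 \<le> z77 (c # ?L)" using z_sub[OF ab ac bc, of m "[]"] by simp
    have ed: "ed (a # ?L) (c # ?L) = 1" by (rule ed_sub[OF ac])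
    have "set (a # ?L) \<subseteq> Alph \<and> set (c # ?L) \<subseteq> Alph \<and> length (c # ?L) = length (a # ?L)
        \<and> ed (a # ?L) (c # ?L) = 1 \<and> z77 (a # ?L) \<ge> m
        \<and> int (z77 (c # ?L)) - int (z77 (a # ?L)) \<ge> int (z77 (a # ?L)) - 1"
      using setL[of "Suc m"] inA z' ed zT[of m] by simp
    then show "\<exists>T T'. set T \<subseteq> Alph \<and> set T' \<subseteq> Alph \<and> length T' = length T
        \<and> ed T T' = 1 \<and> z77 T \<ge> m \<and> int (z77 T') - int (z77 T) \<ge> int (z77 T) - 1"
      by blast
  qed
  have S4: "\<forall>m. \<exists>T T'. set T \<subseteq> Alph \<and> set T' \<subseteq> Alph \<and> length T' = length T + 1
        \<and> ed T T' = 1 \<and> z77 T \<ge> m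
        \<and> int (z77 T') - int (z77 T) \<ge> int (z77 T) - 1"
  proof
    fix m
    let ?L = "tl (W a b (Suc m))"
    have z': "2 * m + 3 \<le> z77 (a # c # ?L)" using z_ins[OF ab ac bc, of m "[]"] by simp
    have ed: "ed (a # ?L) (a # c # ?L) = 1" by (rule ed_ins)
    have "set (a # ?L) \<subseteq> Alph \<and> set (a # c # ?L) \<subseteq> Alph \<and> length (a # c # ?L) = length (a # ?L) + 1
        \<and> ed (a # ?L) (a # c # ?L) = 1 \<and> z77 (a # ?L) \<ge> m
        \<and> int (z77 (a # c # ?L)) - int (z77 (a # ?L)) \<ge> int (z77 (a # ?L)) - 1"
      using setL[of "Suc m"] inA z' ed zT[of m] by simp
    then show "\<exists>T T'. set T \<subseteq> Alph \<and> set T' \<subseteq> Alph \<and> length T' = length T + 1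
        \<and> ed T T' = 1 \<and> z77 T \<ge> m \<and> int (z77 T') - int (z77 T) \<ge> int (z77 T) - 1"
      by blast
  qed
  have S6: "\<forall>m. \<exists>T T'. set T \<subseteq> Alph \<and> set T' \<subseteq> Alph \<and> length T' + 1 = length T
        \<and> ed T T' = 1 \<and> z77 T \<ge> m
        \<and> int (z77 T') - int (z77 T) \<ge> int (z77 T) - 2"
  proof
    fix m
    let ?L = "tl (W a b (Suc m))"
    have z': "2 * m + 2 \<le> z77 ?L" using z_del[OF ab, of m "[]"] by simp
    have ed: "ed (a # ?L) ?L = 1" by (rule ed_del)
    have "set (a # ?L) \<subseteq> Alph \<and> set ?L \<subseteq> Alph \<and> length ?L + 1 = length (a # ?L)
        \<and> ed (a # ?L) ?L = 1 \<and> z77 (a # ?L) \<ge> m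
        \<and> int (z77 ?L) - int (z77 (a # ?L)) \<ge> int (z77 (a # ?L)) - 2"
      using setL[of "Suc m"] inA z' ed zT[of m] by simp
    then show "\<exists>T T'. set T \<subseteq> Alph \<and> set T' \<subseteq> Alph \<and> length T' + 1 = length T
        \<and> ed T T' = 1 \<and> z77 T \<ge> m \<and> int (z77 T') - int (z77 T) \<ge> int (z77 T) - 2"
      by blast
  qed
  show ?thesis using S1 S2 S3 S4 S5 S6 by blast
qed

end
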